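(* TDS reduces (via a computable many-one reduction) to TDS$_{01}$; moreover, the reduction preserves eventual periodicity and non-eventual periodicity of solutions, i.e., an instance has an eventually-periodic (resp. non-eventually-periodic) solution iff its image does.
   Context: An instance of TDS consists of a rational discount factor $0<\lambda<1$, a rational target $t$, and rational weights $a,b$; a solution is an infinite sequence $w\in\{a,b\}^\omega$ with $\sum_{i=0}^\infty w(i)\lambda^i=t$. An instance of TDS$_{01}$ consists of a rational discount factor $0<\lambda<1$ and a rational target $t$; a solution is an infinite sequence $w\in\{0,1\}^\omega$ (indexed from $1$) with $\sum_{i=1}^\infty w(i)\lambda^i=t$. A sequence is eventually periodic if it has the form $uv^\omega$ with finite $u$ and nonempty finite $v$. *)

theory Defs
  imports Complex_Main
begin

definition TDS_sol :: "rat \<Rightarrow> rat \<Rightarrow> rat \<Rightarrow> rat \<Rightarrow> (nat \<Rightarrow> rat) \<Rightarrow> bool" where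
  "TDS_sol lam t a b w \<longleftrightarrow>
     (\<forall>i. w i \<in> {a, b}) \<and>
     (\<lambda>i. real_of_rat (w i) * real_of_rat lam ^ i) sums real_of_rat t"

text \<open>A TDS01 solution: w in {0,1}^omega indexed from 1; we store it as
  s :: nat => rat with s k = w(k+1), so the sum is sum_k s k * lambda^(k+1).\<close>
definition TDS01_sol :: "rat \<Rightarrow> rat \<Rightarrow> (nat \<Rightarrow> rat) \<Rightarrow> bool" where
  "TDS01_sol lam t s \<longleftrightarrow>
     (\<forall>k. s k \<in> {0, 1}) \<and>
     (\<lambda>k. real_of_rat (s k) * real_of_rat lam ^ (Suc k)) sums real_of_rat t"

text \<open>Eventually periodic = of the form u v^omega with v nonempty.\<close>
definition eventually_periodic :: "(nat \<Rightarrow> 'a) \<Rightarrow> bool" where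
  "eventually_periodic w \<longleftrightarrow> (\<exists>n p. p > 0 \<and> (\<forall>i\<ge>n. w (i + p) = w i))"

text \<open>The explicit (evidently computable: rational arithmetic and equality tests)
  reduction mapping a TDS instance (lambda,t,a,b) to a TDS01 instance (lambda',t').\<close>
definition tds_red :: "rat \<Rightarrow> rat \<Rightarrow> rat \<Rightarrow> rat \<Rightarrow> rat \<times> rat" where
  "tds_red lam t a b =
     (if a \<noteq> b then (lam, lam * (t - a / (1 - lam)) / (b - a))
      else if t = a / (1 - lam) then (1/2, 1) else (1/2, 2))"

end

theory Submission
  imports Defs
begin

lemma key_real:
  fixes S :: "nat \<Rightarrow> real" and L A B T :: real
  assumes L0: "0 < L" and L1: "L < 1" and AB: "A \<noteq> B"
  shows "(\<lambda>i. (A + (B - A) * S i) * L ^ i) sums T \<longleftrightarrow>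
         (\<lambda>k. S k * L ^ Suc k) sums (L * (T - A / (1 - L)) / (B - A))"
proof -
  have g: "(\<lambda>i. A * L ^ i) sums (A * (1 / (1 - L)))"
    by (rule sums_mult) (rule geometric_sums, use L0 L1 in auto)
  have c: "L / (B - A) \<noteq> 0" using L0 AB by auto
  have eq1: "(\<lambda>i. (A + (B - A) * S i) * L ^ i) = (\<lambda>i. A * L ^ i + (B - A) * S i * L ^ i)"
    by (auto simp: algebra_simps)
  have "(\<lambda>i. (A + (B - A) * S i) * L ^ i) sums T \<longleftrightarrow>
        (\<lambda>i. (B - A) * S i * L ^ i) sums (T - A / (1 - L))"
  proof
    assume h: "(\<lambda>i. (A + (B - A) * S i) * L ^ i) sums T"
    have "(\<lambda>i. (A + (B - A) * S i) * L ^ i - A * L ^ i) sums (T - A * (1 / (1 - L)))"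
      by (rule sums_diff[OF h g])
    then show "(\<lambda>i. (B - A) * S i * L ^ i) sums (T - A / (1 - L))"
      by (simp add: algebra_simps)
  next
    assume h: "(\<lambda>i. (B - A) * S i * L ^ i) sums (T - A / (1 - L))"
    have "(\<lambda>i. A * L ^ i + (B - A) * S i * L ^ i) sums (A * (1 / (1 - L)) + (T - A / (1 - L)))"
      by (rule sums_add[OF g h])
    then show "(\<lambda>i. (A + (B - A) * S i) * L ^ i) sums T"
      by (simp add: eq1)
  qed
  also have "\<dots> \<longleftrightarrow> (\<lambda>i. (L / (B - A)) * ((B - A) * S i * L ^ i)) sums ((L / (B - A)) * (T - A / (1 - L)))"
    by (rule sums_mult_iff[OF c, symmetric])
  also have "(\<lambda>i. (L / (B - A)) * ((B - A) * S i * L ^ i)) = (\<lambda>k. S k * L ^ Suc k)"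
    using AB by (auto simp: field_simps)
  also have "(L / (B - A)) * (T - A / (1 - L)) = L * (T - A / (1 - L)) / (B - A)"
    by simp
  finally show ?thesis .
qed

lemma ep_comp:
  assumes "inj f"
  shows "eventually_periodic (\<lambda>i. f (w i)) \<longleftrightarrow> eventually_periodic w"
proof
  assume "eventually_periodic (\<lambda>i. f (w i))"
  then obtain n p where "p > 0" "\<forall>i\<ge>n. f (w (i + p)) = f (w i)"
    unfolding eventually_periodic_def by blast
  hence "p > 0 \<and> (\<forall>i\<ge>n. w (i + p) = w i)" using assms by (auto dest: injD)
  thus "eventually_periodic w" unfolding eventually_periodic_def by blast
next
  assume "eventually_periodic w"
  thus "eventually_periodic (\<lambda>i. f (w i))" unfolding eventually_periodic_def by metis
qed

lemma ep_const: "eventually_periodic (\<lambda>i. c)"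
  unfolding eventually_periodic_def by (rule exI[of _ 0], rule exI[of _ 1]) auto

lemma half_one_unique:
  assumes "TDS01_sol (1/2) 1 s" shows "s = (\<lambda>_. 1)"
proof -
  have s01: "\<forall>k. s k \<in> {0,1}" and h: "(\<lambda>k. real_of_rat (s k) * (1/2) ^ Suc k) sums 1"
    using assms unfolding TDS01_sol_def by (auto simp: of_rat_divide)
  have "(\<lambda>k. (1/2::real) ^ Suc k - real_of_rat (s k) * (1/2) ^ Suc k) sums (1 - 1)"
    by (rule sums_diff[OF power_half_series h])
  moreover have "(\<lambda>k. (1/2::real) ^ Suc k - real_of_rat (s k) * (1/2) ^ Suc k) = (\<lambda>k. (1 - real_of_rat (s k)) * (1/2::real) ^ Suc k)"
    by (rule ext) (simp only: left_diff_distrib mult_1)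
  ultimately have d: "(\<lambda>k. (1 - real_of_rat (s k)) * (1/2::real) ^ Suc k) sums 0"
    by simp
  have nn: "\<And>k. 0 \<le> (1 - real_of_rat (s k)) * (1/2::real) ^ Suc k"
  proof -
    fix k have "s k \<in> {0,1}" using s01 by auto
    thus "0 \<le> (1 - real_of_rat (s k)) * (1/2::real) ^ Suc k" by auto
  qed
  have "\<forall>k. (1 - real_of_rat (s k)) * (1/2::real) ^ Suc k = 0"
    using suminf_eq_zero_iff[OF sums_summable[OF d] nn] sums_unique[OF d] by simp
  hence "\<forall>k. real_of_rat (s k) = 1" by simp
  thus ?thesis by auto
qed

lemma half_two_none:
  assumes "TDS01_sol (1/2) 2 s" shows False
proof -
  have s01: "\<forall>k. s k \<in> {0,1}" and h: "(\<lambda>k. real_of_rat (s k) * (1/2) ^ Suc k) sums 2"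
    using assms unfolding TDS01_sol_def by (auto simp: of_rat_divide)
  have "\<And>k. real_of_rat (s k) * (1/2::real) ^ Suc k \<le> (1/2) ^ Suc k"
  proof -
    fix k have "s k \<in> {0,1}" using s01 by auto
    thus "real_of_rat (s k) * (1/2::real) ^ Suc k \<le> (1/2) ^ Suc k" by auto
  qed
  hence "(2::real) \<le> 1" using sums_le[OF _ h power_half_series] by blast
  thus False by simp
qed

lemma one_half_sol: "TDS01_sol (1/2) 1 (\<lambda>_. 1)"
  unfolding TDS01_sol_def using power_half_series by (simp add: of_rat_divide)

lemma const_sol:
  assumes "0 < lam" "lam < 1"
  shows "TDS_sol lam t a a w \<longleftrightarrow> w = (\<lambda>_. a) \<and> t = a / (1 - lam)"
proof -
  have L0: "0 < real_of_rat lam" using assms(1) by simp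
  have L1: "real_of_rat lam < 1" using assms(2) by simp
  have L: "norm (real_of_rat lam) < 1" using L0 L1 by simp
  have g: "(\<lambda>i. real_of_rat a * real_of_rat lam ^ i) sums (real_of_rat a * (1 / (1 - real_of_rat lam)))"
    by (rule sums_mult[OF geometric_sums[OF L]])
  have e: "real_of_rat (a / (1 - lam)) = real_of_rat a * (1 / (1 - real_of_rat lam))"
    by (simp add: of_rat_divide of_rat_diff)
  show ?thesis
  proof
    assume h: "TDS_sol lam t a a w"
    hence w: "w = (\<lambda>_. a)" unfolding TDS_sol_def by (auto simp: fun_eq_iff)
    with h have hs: "(\<lambda>i. real_of_rat a * real_of_rat lam ^ i) sums real_of_rat t"
      unfolding TDS_sol_def by simp
    have "real_of_rat t = real_of_rat (a / (1 - lam))" using sums_unique2[OF hs g] e by simp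
    hence "t = a / (1 - lam)" by simp
    thus "w = (\<lambda>_. a) \<and> t = a / (1 - lam)" using w by simp
  next
    assume "w = (\<lambda>_. a) \<and> t = a / (1 - lam)"
    thus "TDS_sol lam t a a w" unfolding TDS_sol_def using g e by simp
  qed
qed

lemma eq_case:
  fixes lam t a :: rat
  assumes "0 < lam" and "lam < 1"
  shows "0 < fst (tds_red lam t a a) \<and> fst (tds_red lam t a a) < 1 \<and>
    ((\<exists>w. TDS_sol lam t a a w) \<longleftrightarrow>
       (\<exists>s. TDS01_sol (fst (tds_red lam t a a)) (snd (tds_red lam t a a)) s)) \<and>
    ((\<exists>w. TDS_sol lam t a a w \<and> eventually_periodic w) \<longleftrightarrow>
       (\<exists>s. TDS01_sol (fst (tds_red lam t a a)) (snd (tds_red lam t a a)) s \<and> eventually_periodic s)) \<and>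
    ((\<exists>w. TDS_sol lam t a a w \<and> \<not> eventually_periodic w) \<longleftrightarrow>
       (\<exists>s. TDS01_sol (fst (tds_red lam t a a)) (snd (tds_red lam t a a)) s \<and> \<not> eventually_periodic s))"
proof (cases "t = a / (1 - lam)")
  case tt: True
  have red: "tds_red lam t a a = (1/2, 1)" using tt unfolding tds_red_def by simp
  have w: "TDS_sol lam t a a w \<longleftrightarrow> w = (\<lambda>_. a)" for w
    using const_sol[OF assms, of t a w] tt by simp
  have A: "TDS_sol lam t a a (\<lambda>_. a) \<and> eventually_periodic (\<lambda>_::nat. a)"
    by (simp only: w ep_const simp_thms)
  have B: "\<forall>w. TDS_sol lam t a a w \<longrightarrow> eventually_periodic w"
  proof (intro allI impI)
    fix w assume "TDS_sol lam t a a w"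
    hence "w = (\<lambda>_. a)" using w by blast
    thus "eventually_periodic w" by (simp only: ep_const)
  qed
  have C: "TDS01_sol (1/2) 1 (\<lambda>_. 1) \<and> eventually_periodic (\<lambda>_::nat. 1::rat)"
    using one_half_sol ep_const by (rule conjI)
  have D: "\<forall>s. TDS01_sol (1/2) 1 s \<longrightarrow> eventually_periodic s"
  proof (intro allI impI)
    fix s assume "TDS01_sol (1/2) 1 s"
    hence "s = (\<lambda>_. 1)" by (rule half_one_unique)
    thus "eventually_periodic s" by (simp only: ep_const)
  qed
  have E: "0 < (1/2::rat) \<and> (1/2::rat) < 1" by simp
  have j1: "(\<exists>w. TDS_sol lam t a a w) \<longleftrightarrow> (\<exists>s. TDS01_sol (1/2) 1 s)"
    using A C by blast
  have j2: "(\<exists>w. TDS_sol lam t a a w \<and> eventually_periodic w) \<longleftrightarrow>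
      (\<exists>s. TDS01_sol (1/2) 1 s \<and> eventually_periodic s)"
    using A C by blast
  have j3: "(\<exists>w. TDS_sol lam t a a w \<and> \<not> eventually_periodic w) \<longleftrightarrow>
      (\<exists>s. TDS01_sol (1/2) 1 s \<and> \<not> eventually_periodic s)"
    using B D by blast
  show ?thesis unfolding red fst_conv snd_conv using E j1 j2 j3 by blast
next
  case tf: False
  have red: "tds_red lam t a a = (1/2, 2)" using tf unfolding tds_red_def by simp
  have w: "\<not> TDS_sol lam t a a w" for w
    using const_sol[OF assms, of t a w] tf by simp
  have E: "0 < (1/2::rat) \<and> (1/2::rat) < 1" by simp
  have j1: "\<not> (\<exists>w. TDS_sol lam t a a w)" using w by blast
  have j2: "\<not> (\<exists>s. TDS01_sol (1/2) 2 s)" using half_two_none by blast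
  show ?thesis unfolding red fst_conv snd_conv using E j1 j2 by simp
qed

theorem theorem3:
  fixes lam t a b :: rat
  assumes "0 < lam" and "lam < 1"
  shows "0 < fst (tds_red lam t a b) \<and> fst (tds_red lam t a b) < 1 \<and>
    ((\<exists>w. TDS_sol lam t a b w) \<longleftrightarrow>
       (\<exists>s. TDS01_sol (fst (tds_red lam t a b)) (snd (tds_red lam t a b)) s)) \<and>
    ((\<exists>w. TDS_sol lam t a b w \<and> eventually_periodic w) \<longleftrightarrow>
       (\<exists>s. TDS01_sol (fst (tds_red lam t a b)) (snd (tds_red lam t a b)) s \<and> eventually_periodic s)) \<and>
    ((\<exists>w. TDS_sol lam t a b w \<and> \<not> eventually_periodic w) \<longleftrightarrow>
       (\<exists>s. TDS01_sol (fst (tds_red lam t a b)) (snd (tds_red lam t a b)) s \<and> \<not> eventually_periodic s))"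
proof (cases "a = b")
  case True
  show ?thesis using eq_case[OF assms, of t a] unfolding True[symmetric] .
next
  case False
  define t' where "t' = lam * (t - a / (1 - lam)) / (b - a)"
  have red: "tds_red lam t a b = (lam, t')" using False unfolding tds_red_def t'_def by simp
  have L0: "0 < real_of_rat lam" using assms(1) by simp
  have L1: "real_of_rat lam < 1" using assms(2) by simp
  have AB: "real_of_rat a \<noteq> real_of_rat b" using False by simp
  have t'r: "real_of_rat t' = real_of_rat lam * (real_of_rat t - real_of_rat a / (1 - real_of_rat lam)) / (real_of_rat b - real_of_rat a)"
    unfolding t'_def by (simp add: of_rat_divide of_rat_diff of_rat_mult)
  define g where "g = (\<lambda>x::rat. a + (b - a) * x)"
  define f where "f = (\<lambda>x::rat. (x - a) / (b - a))"
  have injg: "inj g" unfolding g_def inj_def using False by auto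
  have injf: "inj f" unfolding f_def inj_def using False by (auto simp: divide_cancel_right)
  have fg: "f (g x) = x" for x unfolding f_def g_def using False by auto
  have gf: "g (f x) = x" for x unfolding f_def g_def using False by auto
  have main: "TDS_sol lam t a b (\<lambda>i. g (s i)) \<longleftrightarrow> TDS01_sol lam t' s" if s01: "\<forall>k. s k \<in> {0,1}" for s
  proof -
    have v: "\<forall>i. g (s i) \<in> {a, b}"
    proof
      fix i have "s i = 0 \<or> s i = 1" using s01 by auto
      thus "g (s i) \<in> {a, b}" unfolding g_def by auto
    qed
    have r: "real_of_rat (g (s i)) = real_of_rat a + (real_of_rat b - real_of_rat a) * real_of_rat (s i)" for i
      unfolding g_def by (simp add: of_rat_add of_rat_mult of_rat_diff)
    have fe: "(\<lambda>i. real_of_rat (g (s i)) * real_of_rat lam ^ i) =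
       (\<lambda>i. (real_of_rat a + (real_of_rat b - real_of_rat a) * real_of_rat (s i)) * real_of_rat lam ^ i)"
      by (rule ext) (simp only: r)
    have "TDS_sol lam t a b (\<lambda>i. g (s i)) \<longleftrightarrow>
       (\<lambda>i. real_of_rat (g (s i)) * real_of_rat lam ^ i) sums real_of_rat t"
      unfolding TDS_sol_def using v by blast
    also have "\<dots> \<longleftrightarrow> (\<lambda>k. real_of_rat (s k) * real_of_rat lam ^ Suc k) sums real_of_rat t'"
      unfolding fe t'r by (rule key_real[OF L0 L1 AB])
    also have "\<dots> \<longleftrightarrow> TDS01_sol lam t' s"
      unfolding TDS01_sol_def using s01 by blast
    finally show ?thesis .
  qed
  have f01: "\<forall>k. f (w k) \<in> {0,1}" if "TDS_sol lam t a b w" for w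
  proof
    fix k have "w k = a \<or> w k = b" using that unfolding TDS_sol_def by auto
    thus "f (w k) \<in> {0,1}" using False unfolding f_def by auto
  qed
  have wsol: "TDS_sol lam t a b w \<longleftrightarrow> TDS01_sol lam t' (\<lambda>k. f (w k))" if "TDS_sol lam t a b w" for w
    using main[OF f01[OF that]] gf that by simp
  have fwd: "\<exists>s. TDS01_sol lam t' s \<and> (eventually_periodic s \<longleftrightarrow> eventually_periodic w)"
    if "TDS_sol lam t a b w" for w
    using wsol[OF that] that ep_comp[OF injf, of w] by blast
  have bwd: "\<exists>w. TDS_sol lam t a b w \<and> (eventually_periodic s \<longleftrightarrow> eventually_periodic w)"
    if "TDS01_sol lam t' s" for s
    using main[of s] that ep_comp[OF injg, of s] unfolding TDS01_sol_def by blast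
  have i1: "(\<exists>w. TDS_sol lam t a b w \<and> Pw (eventually_periodic w)) \<longleftrightarrow>
        (\<exists>s. TDS01_sol lam t' s \<and> Pw (eventually_periodic s))" for Pw
  proof
    assume "\<exists>w. TDS_sol lam t a b w \<and> Pw (eventually_periodic w)"
    then obtain w where w: "TDS_sol lam t a b w" "Pw (eventually_periodic w)" by blast
    obtain s where "TDS01_sol lam t' s" "eventually_periodic s \<longleftrightarrow> eventually_periodic w"
      using fwd[OF w(1)] by blast
    thus "\<exists>s. TDS01_sol lam t' s \<and> Pw (eventually_periodic s)" using w(2) by auto
  next
    assume "\<exists>s. TDS01_sol lam t' s \<and> Pw (eventually_periodic s)"
    then obtain s where s: "TDS01_sol lam t' s" "Pw (eventually_periodic s)" by blast
    obtain w where "TDS_sol lam t a b w" "eventually_periodic s \<longleftrightarrow> eventually_periodic w"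
      using bwd[OF s(1)] by blast
    thus "\<exists>w. TDS_sol lam t a b w \<and> Pw (eventually_periodic w)" using s(2) by auto
  qed
  have j1: "(\<exists>w. TDS_sol lam t a b w) \<longleftrightarrow> (\<exists>s. TDS01_sol lam t' s)"
    using i1[of "\<lambda>_. True"] by simp
  have j2: "(\<exists>w. TDS_sol lam t a b w \<and> eventually_periodic w) \<longleftrightarrow>
        (\<exists>s. TDS01_sol lam t' s \<and> eventually_periodic s)"
    using i1[of "\<lambda>x. x"] by simp
  have j3: "(\<exists>w. TDS_sol lam t a b w \<and> \<not> eventually_periodic w) \<longleftrightarrow>
        (\<exists>s. TDS01_sol lam t' s \<and> \<not> eventually_periodic s)"
    using i1[of "Not"] by simp
  show ?thesis unfolding red fst_conv snd_conv using assms j1 j2 j3 by (intro conjI)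
qed

end
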